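(* Let $\varrho\in[1/2,1)$ and let $I\subset(\max\{1,C/E_{\max}\},\infty)$ be an interval on which $$3\psi^2e^{\psi}Q^2-2QE_{\max}+C\ge 0\quad\text{for all }Q\in I.$$ Then the function $$J(Q)=F_{T_c}^{-1}(\varrho;Q)+F_{T_{\mathrm{tx}}}^{-1}(\varrho;Q)$$ is convex on $I$.
   Context: Constants: $D>0$, $\psi>0$, $\kappa>0$, $P_{s,\max}>0$, $f_{\max}>0$, $E_{\max}>0$, $\varepsilon\in(0,1)$, $\eta>0$, $n_p>0$, $t_p>0$. Define $C=\frac{D}{(1-\varepsilon)\eta}$ and $$f_c^*(Q)=\sqrt{\frac{(E_{\max}-C/Q)\,f_{\max}^3}{(e^{\psi Q}-e^{\psi})\,D\,P_{s,\max}}}.$$ Compression time: $T_c\sim\mathrm{Gamma}\big(\kappa,\ \tfrac{(e^{\psi Q}-e^{\psi})D}{\kappa f_c^*(Q)}\big)$, with shape $\kappa$ and the given scale. Its $\varrho$-quantile is denoted $F_{T_c}^{-1}(\varrho;Q)$. Transmission time: with $N=D/(Qn_p)$, $T_{\mathrm{tx}}$ is Gaussian with mean $\mu_{\mathrm{tx}}=\frac{Nt_p}{1-\varepsilon}$ and variance $\sigma_{\mathrm{tx}}^2=\frac{Nt_p^2\varepsilon}{(1-\varepsilon)^2}$. Hence $$F_{T_{\mathrm{tx}}}^{-1}(\varrho;Q)=\mu_{\mathrm{tx}}+z(\varrho)\sigma_{\mathrm{tx}},$$ where $z$ is the standard normal inverse CDF. *)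

theory Defs
  imports "HOL-Probability.Probability"
begin

definition quantile :: "(real \<Rightarrow> real) \<Rightarrow> real \<Rightarrow> real" where
  "quantile F r = Inf {x. r \<le> F x}"

definition std_normal_cdf :: "real \<Rightarrow> real" where
  "std_normal_cdf x = (LINT t:{..x}|lborel. std_normal_density t)"

definition znorm :: "real \<Rightarrow> real" where
  "znorm r = quantile std_normal_cdf r"

definition gamma_density :: "real \<Rightarrow> real \<Rightarrow> real \<Rightarrow> real" where
  "gamma_density k th x =
     (if 0 < x then x powr (k - 1) * exp (- x / th) / (Gamma k * th powr k) else 0)"

definition gamma_cdf :: "real \<Rightarrow> real \<Rightarrow> real \<Rightarrow> real" where
  "gamma_cdf k th x = (LINT t:{..x}|lborel. gamma_density k th t)"

definition gamma_quantile :: "real \<Rightarrow> real \<Rightarrow> real \<Rightarrow> real" where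
  "gamma_quantile k th r = quantile (gamma_cdf k th) r"

definition Cconst :: "real \<Rightarrow> real \<Rightarrow> real \<Rightarrow> real" where
  "Cconst D eps eta = D / ((1 - eps) * eta)"

definition fc_star ::
  "real \<Rightarrow> real \<Rightarrow> real \<Rightarrow> real \<Rightarrow> real \<Rightarrow> real \<Rightarrow> real \<Rightarrow> real \<Rightarrow> real" where
  "fc_star D psi Psmax fmax Emax eps eta Q =
     sqrt ((Emax - Cconst D eps eta / Q) * fmax ^ 3 /
           ((exp (psi * Q) - exp psi) * D * Psmax))"

definition Tc_quantile ::
  "real \<Rightarrow> real \<Rightarrow> real \<Rightarrow> real \<Rightarrow> real \<Rightarrow> real \<Rightarrow> real \<Rightarrow> real \<Rightarrow> real \<Rightarrow> real \<Rightarrow> real" where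
  "Tc_quantile D psi kappa Psmax fmax Emax eps eta r Q =
     gamma_quantile kappa
       ((exp (psi * Q) - exp psi) * D / (kappa * fc_star D psi Psmax fmax Emax eps eta Q)) r"

definition Ttx_quantile ::
  "real \<Rightarrow> real \<Rightarrow> real \<Rightarrow> real \<Rightarrow> real \<Rightarrow> real \<Rightarrow> real" where
  "Ttx_quantile D eps np tp r Q =
     (let N = D / (Q * np);
          mu = N * tp / (1 - eps);
          sigma = sqrt (N * tp ^ 2 * eps / (1 - eps) ^ 2)
      in mu + znorm r * sigma)"

end

theory Submission
  imports Defs
begin


definition LL :: "real \<Rightarrow> real \<Rightarrow> real \<Rightarrow> real \<Rightarrow> real" where
  "LL psi E C Q = 3/2 * ln (exp (psi*Q) - exp psi) - 1/2 * ln (E - C/Q)"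

definition LL1 :: "real \<Rightarrow> real \<Rightarrow> real \<Rightarrow> real \<Rightarrow> real" where
  "LL1 psi E C Q = 3/2 * (psi * exp (psi*Q) / (exp (psi*Q) - exp psi)) - 1/2 * (C / (E*Q^2 - C*Q))"

definition LL2 :: "real \<Rightarrow> real \<Rightarrow> real \<Rightarrow> real \<Rightarrow> real" where
  "LL2 psi E C Q = 3/2 * (- (psi^2 * exp (psi*Q) * exp psi) / (exp (psi*Q) - exp psi)^2)
     - 1/2 * (- (C * (2*E*Q - C)) / (E*Q^2 - C*Q)^2)"

lemma d1:
  assumes "exp (psi*Q) \<noteq> exp psi"
  shows "((\<lambda>Q. psi*exp(psi*Q)/(exp(psi*Q)-exp psi)) has_real_derivative
     -(psi^2*exp(psi*Q)*exp psi)/(exp(psi*Q)-exp psi)^2) (at Q)"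
proof -
  have e: "((\<lambda>Q. exp (psi*Q)) has_real_derivative exp (psi*Q) * psi) (at Q)"
    using DERIV_chain2[OF DERIV_exp DERIV_cmult_Id[of psi Q]] by simp
  have f: "((\<lambda>Q. psi*exp(psi*Q)) has_real_derivative psi * (exp (psi*Q) * psi)) (at Q)"
    by (rule DERIV_cmult[OF e])
  have g: "((\<lambda>Q. exp(psi*Q) - exp psi) has_real_derivative exp (psi*Q) * psi - 0) (at Q)"
    by (rule DERIV_diff[OF e DERIV_const])
  have ne: "exp(psi*Q) - exp psi \<noteq> 0" using assms by simp
  have q: "((\<lambda>Q. psi*exp(psi*Q)/(exp(psi*Q)-exp psi)) has_real_derivative
     (psi * (exp (psi*Q) * psi) * (exp(psi*Q) - exp psi) - psi*exp(psi*Q) * (exp (psi*Q) * psi - 0))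
       / ((exp(psi*Q) - exp psi) * (exp(psi*Q) - exp psi))) (at Q)"
    by (rule DERIV_divide[OF f g ne])
  have "psi * (exp (psi*Q) * psi) * (exp(psi*Q) - exp psi) - psi*exp(psi*Q) * (exp (psi*Q) * psi - 0)
     = -(psi^2*exp(psi*Q)*exp psi)"
    by (simp add: algebra_simps power2_eq_square)
  then show ?thesis using q by (simp add: power2_eq_square)
qed

lemma d2:
  assumes "E*Q^2 - C*Q \<noteq> 0"
  shows "((\<lambda>Q. C/(E*Q^2 - C*Q)) has_real_derivative
     -(C*(2*E*Q - C))/(E*Q^2 - C*Q)^2) (at Q)"
proof -
  have p: "((\<lambda>Q. Q^2) has_real_derivative 2*Q) (at Q)"
    using DERIV_pow[of 2 Q] by simp
  have g: "((\<lambda>Q. E*Q^2 - C*Q) has_real_derivative E*(2*Q) - C) (at Q)"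
    using DERIV_diff[OF DERIV_cmult[OF p, of E] DERIV_cmult_Id[of C Q]] by simp
  have q: "((\<lambda>Q. C/(E*Q^2 - C*Q)) has_real_derivative
      (0 * (E*Q^2 - C*Q) - C * (E*(2*Q) - C)) / ((E*Q^2 - C*Q) * (E*Q^2 - C*Q))) (at Q)"
    by (rule DERIV_divide[OF DERIV_const g assms])
  have "0 * (E*Q^2 - C*Q) - C * (E*(2*Q) - C) = -(C*(2*E*Q - C))"
    by (simp add: algebra_simps)
  moreover have "(E*Q^2 - C*Q) * (E*Q^2 - C*Q) = (E*Q^2 - C*Q)^2" by (simp add: power2_eq_square)
  ultimately show ?thesis using q by (metis minus_divide_left)
qed

lemma d0a:
  assumes "exp (psi*Q) > exp psi"
  shows "((\<lambda>Q. ln (exp (psi*Q) - exp psi)) has_real_derivative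
     psi*exp(psi*Q)/(exp(psi*Q)-exp psi)) (at Q)"
proof -
  have e: "((\<lambda>Q. exp (psi*Q)) has_real_derivative exp (psi*Q) * psi) (at Q)"
    using DERIV_chain2[OF DERIV_exp DERIV_cmult_Id[of psi Q]] by simp
  have g: "((\<lambda>Q. exp(psi*Q) - exp psi) has_real_derivative exp (psi*Q) * psi - 0) (at Q)"
    by (rule DERIV_diff[OF e DERIV_const])
  have pos: "exp(psi*Q) - exp psi > 0" using assms by simp
  have "((\<lambda>Q. ln (exp (psi*Q) - exp psi)) has_real_derivative
     inverse (exp(psi*Q) - exp psi) * (exp (psi*Q) * psi - 0)) (at Q)"
    by (rule DERIV_chain2[OF DERIV_ln[OF pos] g])
  moreover have "inverse (exp(psi*Q) - exp psi) * (exp (psi*Q) * psi - 0) = psi*exp(psi*Q)/(exp(psi*Q)-exp psi)"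
    by (simp add: divide_inverse mult.commute)
  ultimately show ?thesis by simp
qed

lemma d0b:
  assumes "E - C/Q > 0" "Q > 0"
  shows "((\<lambda>Q. ln (E - C/Q)) has_real_derivative C/(E*Q^2 - C*Q)) (at Q)"
proof -
  have qq: "Q \<noteq> 0" using assms by simp
  have c: "((\<lambda>Q. C/Q) has_real_derivative (0 * Q - C * 1) / (Q * Q)) (at Q)"
    by (rule DERIV_divide[OF DERIV_const DERIV_ident qq])
  have g: "((\<lambda>Q. E - C/Q) has_real_derivative 0 - (0 * Q - C * 1) / (Q * Q)) (at Q)"
    by (rule DERIV_diff[OF DERIV_const c])
  have "((\<lambda>Q. ln (E - C/Q)) has_real_derivative inverse (E - C/Q) * (0 - (0 * Q - C * 1) / (Q * Q))) (at Q)"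
    by (rule DERIV_chain2[OF DERIV_ln[OF assms(1)] g])
  moreover have "inverse (E - C/Q) * (0 - (0 * Q - C * 1) / (Q * Q)) = C/(E*Q^2 - C*Q)"
  proof -
    have "E*Q^2 - C*Q = (E - C/Q) * (Q*Q)" using qq by (simp add: power2_eq_square algebra_simps)
    then show ?thesis by (simp add: divide_inverse)
  qed
  ultimately show ?thesis by simp
qed

lemma LL_deriv:
  assumes "psi > 0" "E > 0" "C > 0" "Q > 1" "E*Q > C"
  shows "(LL psi E C has_real_derivative LL1 psi E C Q) (at Q)"
proof -
  have a: "exp (psi*Q) > exp psi" using assms by simp
  have w: "E - C/Q > 0" using assms by (simp add: field_simps)
  show ?thesis unfolding LL_def[abs_def] LL1_def
    by (intro DERIV_diff DERIV_cmult d0a d0b a w) (use assms in auto)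
qed

lemma LL1_deriv:
  assumes "psi > 0" "E > 0" "C > 0" "Q > 1" "E*Q > C"
  shows "(LL1 psi E C has_real_derivative LL2 psi E C Q) (at Q)"
proof -
  have a: "exp (psi*Q) \<noteq> exp psi" using assms by simp
  have w: "E*Q^2 - C*Q \<noteq> 0" using assms by (simp add: power2_eq_square algebra_simps)
  show ?thesis unfolding LL1_def[abs_def] LL2_def
    by (intro DERIV_diff DERIV_cmult d1 d2 a w)
qed

lemma aux_lin:
  fixes A1 P S B1 L q :: real
  shows "A1 \<le> P \<Longrightarrow> S \<le> B1 \<Longrightarrow> L = q - 3/2 * A1 + 1/2 * B1 \<Longrightarrow> L \<ge> q - 3/2 * P + 1/2 * S"
  by linarith

lemma LL_pos:
  assumes "psi > 0" "E > 0" "C > 0" "Q > 1" "E*Q > C"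
  shows "LL1 psi E C Q * LL1 psi E C Q + LL2 psi E C Q \<ge> 0"
proof -
  define x where "x = exp (psi*Q)"
  define y where "y = exp psi"
  define W where "W = E*Q^2 - C*Q"
  define p where "p = psi * x / (x - y)"
  define s where "s = C / W"
  have yx: "y < x" "0 < y" using assms unfolding x_def y_def by auto
  have W: "W > 0"
  proof -
    have "W = Q * (E*Q - C)" unfolding W_def by (simp add: power2_eq_square algebra_simps)
    then show ?thesis using assms by simp
  qed
  have 1: "psi^2 * x * y / (x - y)^2 \<le> p^2"
  proof -
    have "psi^2 * x * y \<le> psi^2 * x * x" using yx by (intro mult_left_mono) auto
    then have "psi^2 * x * y / (x - y)^2 \<le> psi^2 * x * x / (x - y)^2"
      by (intro divide_right_mono) auto
    also have "\<dots> = p^2" unfolding p_def by (simp add: power2_eq_square field_simps)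
    finally show ?thesis .
  qed
  have 2: "C * (2*E*Q - C) / W^2 \<ge> s^2"
  proof -
    have "C * C \<le> C * (2*E*Q - C)" using assms by (intro mult_left_mono) auto
    then have "C * C / W^2 \<le> C * (2*E*Q - C) / W^2" by (intro divide_right_mono) auto
    moreover have "C * C / W^2 = s^2" unfolding s_def by (simp add: power2_eq_square)
    ultimately show ?thesis by simp
  qed
  have L1: "LL1 psi E C Q = 3/2 * p - 1/2 * s" unfolding LL1_def p_def s_def x_def y_def W_def by simp
  have L2: "LL2 psi E C Q = - 3/2 * (psi^2 * x * y / (x - y)^2) + 1/2 * (C * (2*E*Q - C) / W^2)"
    unfolding LL2_def x_def y_def W_def by simp
  have "LL1 psi E C Q * LL1 psi E C Q + LL2 psi E C Q \<ge> (3/2 * p - 1/2 * s)^2 - 3/2 * p^2 + 1/2 * s^2"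
  proof -
    have "LL1 psi E C Q * LL1 psi E C Q = (3/2 * p - 1/2 * s)^2" unfolding L1 by (simp add: power2_eq_square)
    then have "LL1 psi E C Q * LL1 psi E C Q + LL2 psi E C Q = (3/2 * p - 1/2 * s)^2
       - 3/2 * (psi^2 * x * y / (x - y)^2) + 1/2 * (C * (2*E*Q - C) / W^2)" using L2 by simp
    then show ?thesis using aux_lin[OF 1 2] by blast
  qed
  moreover have "(3/2 * p - 1/2 * s)^2 - 3/2 * p^2 + 1/2 * s^2 = 3/4 * (p - s)^2"
    by (simp add: power2_eq_square algebra_simps)
  moreover have "3/4 * (p - s)^2 \<ge> 0" by simp
  ultimately show ?thesis by linarith
qed

lemma h_convex:
  assumes "psi > 0" "E > 0" "C > 0"
  shows "convex_on {max 1 (C/E)<..} (\<lambda>Q. exp (LL psi E C Q))"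
proof (rule f''_ge0_imp_convex)
  show "convex {max 1 (C/E)<..}" by simp
  fix Q assume "Q \<in> {max 1 (C/E)<..}"
  then have Q: "Q > 1" "E*Q > C" using assms by (auto simp: field_simps)
  show "((\<lambda>Q. exp (LL psi E C Q)) has_real_derivative exp (LL psi E C Q) * LL1 psi E C Q) (at Q)"
    by (rule DERIV_cong, rule DERIV_chain2[OF DERIV_exp LL_deriv]) (use assms Q in auto)
  show "((\<lambda>Q. exp (LL psi E C Q) * LL1 psi E C Q) has_real_derivative
      exp (LL psi E C Q) * LL1 psi E C Q * LL1 psi E C Q + exp (LL psi E C Q) * LL2 psi E C Q) (at Q)"
    by (rule DERIV_cong, rule DERIV_mult[OF DERIV_chain2[OF DERIV_exp LL_deriv] LL1_deriv])
       (use assms Q in \<open>auto simp: algebra_simps\<close>)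
  have "exp (LL psi E C Q) * (LL1 psi E C Q * LL1 psi E C Q + LL2 psi E C Q) \<ge> 0"
    using LL_pos[OF assms Q] by simp
  then show "exp (LL psi E C Q) * LL1 psi E C Q * LL1 psi E C Q + exp (LL psi E C Q) * LL2 psi E C Q \<ge> 0"
    by (simp add: algebra_simps)
qed



lemma gamma_density_scale:
  assumes th: "th > 0"
  shows "gamma_density k th t = gamma_density k 1 (t/th) / th"
proof (cases "t > 0")
  case True
  have "(t/th) powr (k-1) = t powr (k-1) / th powr (k-1)"
    using True th by (simp add: powr_divide)
  moreover have "th powr k = th powr (k-1) * th"
  proof -
    have "th powr k = th powr ((k-1) + 1)" by simp
    also have "\<dots> = th powr (k-1) * th powr 1" by (rule powr_add)
    also have "\<dots> = th powr (k-1) * th" using th by simp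
    finally show ?thesis .
  qed
  moreover have "th powr (k-1) > 0" using th by simp
  ultimately show ?thesis using True th unfolding gamma_density_def
    by (cases "Gamma k = 0") (simp_all add: field_simps)
next
  case False
  then show ?thesis using th unfolding gamma_density_def by (simp add: field_simps)
qed

lemma gamma_cdf_scale:
  assumes th: "th > 0"
  shows "gamma_cdf k th x = gamma_cdf k 1 (x/th)"
proof -
  have "gamma_cdf k th x = (\<integral>t. indicator {..x} t * gamma_density k th t \<partial>lborel)"
    unfolding gamma_cdf_def set_lebesgue_integral_def by simp
  also have "\<dots> = \<bar>th\<bar> *\<^sub>R (\<integral>u. indicator {..x} (0 + th * u) * gamma_density k th (0 + th * u) \<partial>lborel)"
    using th by (intro lborel_integral_real_affine) simp
  also have "\<dots> = th * (\<integral>u. indicator {..x/th} u * gamma_density k 1 u / th \<partial>lborel)"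
  proof -
    have "\<And>u. indicator {..x} (0 + th * u) * gamma_density k th (0 + th * u)
           = indicator {..x/th} u * gamma_density k 1 u / th"
      using th by (simp add: gamma_density_scale[OF th] indicator_def field_simps)
    then show ?thesis using th by simp
  qed
  also have "\<dots> = (\<integral>u. indicator {..x/th} u * gamma_density k 1 u \<partial>lborel)"
    using th by simp
  also have "\<dots> = gamma_cdf k 1 (x/th)"
    unfolding gamma_cdf_def set_lebesgue_integral_def by simp
  finally show ?thesis .
qed

lemma gamma_cdf_nonpos:
  assumes "y \<le> 0"
  shows "gamma_cdf k 1 y = 0"
proof -
  have "(\<lambda>t. indicator {..y} t * gamma_density k 1 t) = (\<lambda>t. 0::real)"
    using assms by (auto simp: indicator_def gamma_density_def)
  then show ?thesis unfolding gamma_cdf_def set_lebesgue_integral_def by simp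
qed

lemma quantile_scale:
  fixes G :: "real \<Rightarrow> real"
  assumes th: "th > 0" and ne: "{y. r \<le> G y} \<noteq> {}" and pos: "\<And>y. r \<le> G y \<Longrightarrow> y \<ge> 0"
  shows "Inf {x. r \<le> G (x/th)} = th * Inf {y. r \<le> G y}"
proof (rule cInf_eq_non_empty)
  have bdd: "bdd_below {y. r \<le> G y}" unfolding bdd_below_def using pos by auto
  obtain y0 where "r \<le> G y0" using ne by auto
  then show "{x. r \<le> G (x/th)} \<noteq> {}" using th by (auto intro!: exI[of _ "th*y0"])
  fix x assume "x \<in> {x. r \<le> G (x/th)}"
  then have "Inf {y. r \<le> G y} \<le> x/th" using bdd by (intro cInf_lower) auto
  then show "th * Inf {y. r \<le> G y} \<le> x" using th by (simp add: field_simps)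
next
  fix z assume H: "\<And>x. x \<in> {x. r \<le> G (x/th)} \<Longrightarrow> z \<le> x"
  have "z/th \<le> Inf {y. r \<le> G y}"
  proof (rule cInf_greatest[OF ne])
    fix y assume "y \<in> {y. r \<le> G y}"
    then have "z \<le> th*y" using H[of "th*y"] th by simp
    then show "z/th \<le> y" using th by (simp add: field_simps)
  qed
  then show "z \<le> th * Inf {y. r \<le> G y}" using th by (simp add: field_simps)
qed

lemma gamma_quantile_cases:
  assumes r: "r > 0"
  shows "(\<forall>th>0. gamma_quantile k th r = Inf {}) \<or>
         (\<exists>q\<ge>0. \<forall>th>0. gamma_quantile k th r = th * q)"
proof (cases "{y. r \<le> gamma_cdf k 1 y} = {}")
  case True
  have "\<forall>th>0. gamma_quantile k th r = Inf {}"
  proof (intro allI impI)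
    fix th :: real assume th: "th > 0"
    have "{x. r \<le> gamma_cdf k th x} = {}" using True by (simp add: gamma_cdf_scale[OF th])
    then show "gamma_quantile k th r = Inf {}" unfolding gamma_quantile_def quantile_def by simp
  qed
  then show ?thesis by blast
next
  case False
  have pos: "y \<ge> 0" if "r \<le> gamma_cdf k 1 y" for y
  proof (rule ccontr)
    assume "\<not> y \<ge> 0"
    then have "gamma_cdf k 1 y = 0" by (intro gamma_cdf_nonpos) auto
    then show False using r that by simp
  qed
  have "0 \<le> Inf {y. r \<le> gamma_cdf k 1 y}"
    using False pos by (intro cInf_greatest) auto
  moreover have "\<forall>th>0. gamma_quantile k th r = th * Inf {y. r \<le> gamma_cdf k 1 y}"
  proof (intro allI impI)
    fix th :: real assume th: "th > 0"
    show "gamma_quantile k th r = th * Inf {y. r \<le> gamma_cdf k 1 y}"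
      unfolding gamma_quantile_def quantile_def gamma_cdf_scale[OF th]
      by (rule quantile_scale[OF th False pos])
  qed
  ultimately show ?thesis by blast
qed



definition NM :: "real measure" where "NM = density lborel std_normal_density"

lemma NM_prob: "prob_space NM"
  unfolding NM_def by (rule prob_space_normal_density) simp

lemma NM_real: "real_distribution NM"
proof -
  interpret prob_space NM by (rule NM_prob)
  show ?thesis by unfold_locales (simp add: NM_def)
qed

lemma NM_meas: "A \<in> sets borel \<Longrightarrow> measure NM A = (\<integral>t. std_normal_density t * indicator A t \<partial>lborel)"
proof -
  assume A: "A \<in> sets borel"
  have "measure NM A = integral\<^sup>L NM (indicator A)"
    by (simp add: NM_def)
  also have "\<dots> = (\<integral>t. std_normal_density t *\<^sub>R indicator A t \<partial>lborel)"
    unfolding NM_def using A by (intro integral_density) auto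
  finally show ?thesis by simp
qed

lemma Phi_eq: "std_normal_cdf x = measure NM {..x}"
  unfolding std_normal_cdf_def set_lebesgue_integral_def NM_meas[OF atMost_borel]
  by (simp add: mult.commute)

lemma Phi_exists: "r < 1 \<Longrightarrow> \<exists>x. r \<le> std_normal_cdf x"
proof -
  assume r: "r < 1"
  interpret real_distribution NM by (rule NM_real)
  have "eventually (\<lambda>x. cdf NM x > r) at_top"
    using cdf_lim_at_top_prob r by (rule order_tendstoD)
  then obtain x where "cdf NM x > r" using eventually_False_sequentially
    by (metis eventually_at_top_linorder order_refl)
  then show ?thesis unfolding Phi_eq cdf_def by (auto intro!: exI[of _ x] less_imp_le)
qed

lemma NM_reflect: "measure NM {x<..} = measure NM {..<-x}"
proof -
  have "measure NM {x<..} = (\<integral>t. std_normal_density t * indicator {x<..} t \<partial>lborel)"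
    by (rule NM_meas) simp
  also have "\<dots> = \<bar>-1\<bar> *\<^sub>R (\<integral>u. std_normal_density (0 + -1 * u) * indicator {x<..} (0 + -1 * u) \<partial>lborel)"
    by (rule lborel_integral_real_affine) simp
  also have "\<dots> = (\<integral>u. std_normal_density u * indicator {..<-x} u \<partial>lborel)"
  proof -
    have "(\<lambda>u. std_normal_density (0 + -1*u) * indicator {x<..} (0 + -1*u)) = (\<lambda>u. std_normal_density u * (indicator {..<-x} u :: real))"
      by (auto simp: std_normal_density_def indicator_def fun_eq_iff)
    then show ?thesis by simp
  qed
  also have "\<dots> = measure NM {..<-x}"
    by (rule NM_meas[symmetric]) simp
  finally show ?thesis .
qed

lemma NM_pos: assumes "x < 0" shows "measure NM {x<..<-x} > 0"
proof -
  have int1: "integrable lborel (\<lambda>t. std_normal_density t * indicator {x<..<-x} t)"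
    by (intro integrable_real_mult_indicator) auto
  have int2: "integrable lborel (\<lambda>t. std_normal_density x * indicator {x<..<-x} t)"
    using assms by (intro integrable_mult_right integrable_real_indicator) auto
  have "(\<integral>t. std_normal_density x * indicator {x<..<-x} t \<partial>lborel)
      \<le> (\<integral>t. std_normal_density t * indicator {x<..<-x} t \<partial>lborel)"
  proof (rule integral_mono[OF int2 int1])
    fix t
    show "std_normal_density x * indicator {x<..<-x} t \<le> std_normal_density t * indicator {x<..<-x} t"
    proof (cases "t \<in> {x<..<-x}")
      case True
      then have "t^2 \<le> x^2" using assms by (simp add: abs_le_square_iff[symmetric] abs_le_iff)
      then have "exp (- (x^2 / 2)) \<le> exp (- (t^2 / 2))" by simp
      then show ?thesis using True by (auto simp: std_normal_density_def indicator_def divide_right_mono)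
    qed (auto simp: indicator_def)
  qed
  moreover have "(\<integral>t. std_normal_density x * indicator {x<..<-x} t \<partial>lborel) = std_normal_density x * (-2*x)"
    using assms by simp
  moreover have "std_normal_density x * (-2*x) > 0" using assms normal_density_pos[of 1 0 x] mult_neg_pos[of x "std_normal_density x"] by simp
  ultimately have "0 < (\<integral>t. std_normal_density t * indicator {x<..<-x} t \<partial>lborel)" by linarith
  then show ?thesis using NM_meas[of "{x<..<-x}"] by simp
qed

lemma Phi_neg: assumes "x < 0" shows "std_normal_cdf x < 1/2"
proof -
  interpret prob_space NM by (rule NM_prob)
  have s: "space NM = UNIV" by (simp add: NM_def)
  have "measure NM {..x} + measure NM {x<..} = 1"
  proof -
    have "measure NM ({..x} \<union> {x<..}) = measure NM {..x} + measure NM {x<..}"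
      by (intro finite_measure_Union) (auto simp: NM_def)
    moreover have "{..x} \<union> {x<..} = space NM" using s by auto
    ultimately show ?thesis by (simp add: prob_space)
  qed
  moreover have "measure NM {..<-x} = measure NM {..x} + measure NM {x<..<-x}"
  proof -
    have "measure NM ({..x} \<union> {x<..<-x}) = measure NM {..x} + measure NM {x<..<-x}"
      by (intro finite_measure_Union) (auto simp: NM_def)
    moreover have "{..x} \<union> {x<..<-x} = {..<-x}" using assms by auto
    ultimately show ?thesis by simp
  qed
  ultimately show ?thesis using NM_reflect[of x] NM_pos[OF assms] Phi_eq[of x] by linarith
qed

lemma znorm_nonneg: assumes "1/2 \<le> r" "r < 1" shows "znorm r \<ge> 0"
  unfolding znorm_def quantile_def
proof (rule cInf_greatest)
  show "{x. r \<le> std_normal_cdf x} \<noteq> {}" using Phi_exists[OF assms(2)] by auto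
  fix x assume "x \<in> {x. r \<le> std_normal_cdf x}"
  then show "0 \<le> x" using Phi_neg[of x] assms by force
qed



lemma convex_on_cong':
  assumes "convex_on S f" "\<And>x. x \<in> S \<Longrightarrow> f x = g x"
  shows "convex_on S g"
proof -
  have "convex S" using assms(1) by (rule convex_on_imp_convex)
  then show ?thesis using assms unfolding convex_on_def by (auto simp: convex_def)
qed

lemma powr_convex_neg:
  shows "convex_on {0<..} (\<lambda>x::real. x powr (-1/2))"
proof (rule f''_ge0_imp_convex)
  show "convex {0::real<..}" by simp
  fix x :: real assume "x \<in> {0<..}"
  then have x: "x > 0" by simp
  show "((\<lambda>x. x powr (-1/2)) has_real_derivative (-1/2) * x powr (-1/2 - 1)) (at x)"
    by (rule has_real_derivative_powr[OF x])
  show "((\<lambda>x. (-1/2) * x powr (-1/2 - 1)) has_real_derivative (-1/2) * ((-1/2 - 1) * x powr (-1/2 - 1 - 1))) (at x)"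
    by (intro DERIV_cmult has_real_derivative_powr[OF x])
  show "0 \<le> (-1/2) * ((-1/2 - 1) * x powr (-1/2 - 1 - 1))" by simp
qed

lemma Ttx_convex:
  fixes D eps np tp r :: real
  assumes "D > 0" "0 < eps" "eps < 1" "np > 0" "tp > 0" "znorm r \<ge> 0"
  shows "convex_on {0<..} (Ttx_quantile D eps np tp r)"
proof -
  define A where "A = D * tp / (np * (1 - eps))"
  define B where "B = znorm r * sqrt (D * tp^2 * eps / (np * (1 - eps)^2))"
  have A: "A \<ge> 0" unfolding A_def using assms by simp
  have B: "B \<ge> 0" unfolding B_def using assms by simp
  have "convex_on {0<..} (\<lambda>Q::real. A * inverse Q + B * Q powr (-1/2))"
    by (intro convex_on_add convex_on_cmul A B powr_convex_neg convex_on_inverse) auto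
  moreover have "A * inverse Q + B * Q powr (-1/2) = Ttx_quantile D eps np tp r Q" if Q: "Q \<in> {0<..}" for Q
  proof -
    have Q: "Q > 0" using Q by simp
    have "sqrt (D / (Q * np) * tp^2 * eps / (1 - eps)^2) = sqrt (D * tp^2 * eps / (np * (1 - eps)^2)) * sqrt (inverse Q)"
      by (subst real_sqrt_mult[symmetric]) (simp add: field_simps)
    moreover have "sqrt (inverse Q) = Q powr (-1/2)"
      using Q by (simp add: powr_minus powr_half_sqrt[symmetric] real_sqrt_inverse)
    ultimately show ?thesis unfolding Ttx_quantile_def Let_def A_def B_def
      by (simp add: field_simps)
  qed
  ultimately show ?thesis by (rule convex_on_cong')
qed



lemma alg1:
  fixes a D kappa w f P :: real
  assumes "a > 0" "D > 0" "kappa > 0" "w > 0" "f > 0" "P > 0"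
  shows "a^2 * D^2 / (kappa^2 * (w * f ^ 3 / (a * D * P))) = D^2 * (D * P / f^3) / kappa^2 * (a^3 / w)"
  using assms by (simp add: field_simps power2_eq_square power3_eq_cube)

lemma alg_lhs:
  fixes a D kappa X :: real
  assumes "X > 0"
  shows "(a * D / (kappa * sqrt X))^2 = a^2 * D^2 / (kappa^2 * X)"
  using assms by (simp add: power_divide power_mult_distrib)

lemma theta_eq:
  fixes psi D kappa P f E C Q :: real
  assumes "psi > 0" "D > 0" "kappa > 0" "P > 0" "f > 0" "E > 0" "C > 0" "Q > 1" "E*Q > C"
  shows "(exp (psi * Q) - exp psi) * D /
           (kappa * sqrt ((E - C / Q) * f ^ 3 / ((exp (psi * Q) - exp psi) * D * P)))
         = (D * sqrt (D * P / f^3) / kappa) * exp (LL psi E C Q)"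
proof -
  define a where "a = exp (psi * Q) - exp psi"
  define w where "w = E - C / Q"
  define L where "L = LL psi E C Q"
  have a: "a > 0" unfolding a_def using assms by simp
  have w: "w > 0" unfolding w_def using assms by (simp add: field_simps)
  have X: "w * f ^ 3 / (a * D * P) > 0" using a w assms by simp
  have LLe: "L = 3/2 * ln a - 1/2 * ln w"
    unfolding L_def LL_def a_def w_def by simp
  have LL2: "2 * L = ln (a^3) - ln w"
    unfolding LLe using a by (simp add: ln_realpow)
  have e: "exp L ^ 2 = a^3 / w"
  proof -
    have "exp L ^ 2 = exp (2 * L)"
      by (simp only: power2_eq_square mult_2 exp_add)
    also have "\<dots> = exp (ln (a^3)) / exp (ln w)" unfolding LL2 by (rule exp_diff)
    also have "\<dots> = a^3 / w" using a w by simp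
    finally show ?thesis .
  qed
  define K where "K = D * sqrt (D * P / f^3) / kappa"
  have K2: "K^2 = D^2 * (D * P / f^3) / kappa^2"
    unfolding K_def using assms by (simp add: power_divide power_mult_distrib)
  have rhs: "(K * exp L)^2 = D^2 * (D * P / f^3) / kappa^2 * (a^3 / w)"
    by (simp only: power_mult_distrib K2 e)
  have sq: "(a * D / (kappa * sqrt (w * f ^ 3 / (a * D * P))))^2 = (K * exp L)^2"
    unfolding rhs alg_lhs[OF X] by (rule alg1[OF a assms(2,3) w assms(5,4)])
  have n1: "a * D / (kappa * sqrt (w * f ^ 3 / (a * D * P))) \<ge> 0" using a X assms by simp
  have n2: "K * exp L \<ge> 0" unfolding K_def using assms by simp
  have "a * D / (kappa * sqrt (w * f ^ 3 / (a * D * P))) = K * exp L"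
    using power2_eq_iff_nonneg[OF n1 n2] sq by simp
  then show ?thesis unfolding a_def w_def K_def L_def .
qed


theorem theorem1:
  fixes D psi kappa Psmax fmax Emax eps eta np tp r :: real
    and I :: "real set"
  assumes "D > 0" "psi > 0" "kappa > 0" "Psmax > 0" "fmax > 0" "Emax > 0"
    and "0 < eps" "eps < 1" "eta > 0" "np > 0" "tp > 0"
    and "1/2 \<le> r" "r < 1"
    and "is_interval I"
    and "I \<subseteq> {max 1 (Cconst D eps eta / Emax)<..}"
    and "\<forall>Q\<in>I. 3 * psi^2 * exp psi * Q^2 - 2 * Q * Emax + Cconst D eps eta \<ge> 0"
  shows "convex_on I (\<lambda>Q. Tc_quantile D psi kappa Psmax fmax Emax eps eta r Q
                          + Ttx_quantile D eps np tp r Q)"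
proof -
  define C0 where "C0 = Cconst D eps eta"
  have C0: "C0 > 0" unfolding C0_def Cconst_def using assms by simp
  have cI: "convex I" using assms(14) by (rule is_interval_convex)
  have QI: "Q > 1" "Emax * Q > C0" if "Q \<in> I" for Q
    using assms(15) that assms(6) unfolding C0_def[symmetric] by (auto simp: field_simps)
  define K where "K = D * sqrt (D * Psmax / fmax^3) / kappa"
  have K: "K \<ge> 0" unfolding K_def using assms by simp
  define th where "th Q = (exp (psi * Q) - exp psi) * D / (kappa * fc_star D psi Psmax fmax Emax eps eta Q)" for Q
  have th_eq: "th Q = K * exp (LL psi Emax C0 Q)" if "Q \<in> I" for Q
    unfolding th_def fc_star_def K_def C0_def[symmetric]
    by (rule theta_eq) (use assms C0 QI[OF that] in auto)
  have th_pos: "th Q > 0" if "Q \<in> I" for Q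
    unfolding th_eq[OF that] K_def using assms by simp
  have Tc: "Tc_quantile D psi kappa Psmax fmax Emax eps eta r Q = gamma_quantile kappa (th Q) r" for Q
    unfolding Tc_quantile_def th_def by simp
  have conv_Tc: "convex_on I (\<lambda>Q. Tc_quantile D psi kappa Psmax fmax Emax eps eta r Q)"
  proof -
    have r0: "r > 0" using assms by simp
    from gamma_quantile_cases[OF r0, of kappa] show ?thesis
    proof
      assume H: "\<forall>th>0. gamma_quantile kappa th r = Inf {}"
      have "convex_on I (\<lambda>Q. Inf {} :: real)" using cI by (simp add: convex_on_const)
      then show ?thesis by (rule convex_on_cong') (simp add: Tc H th_pos)
    next
      assume "\<exists>q\<ge>0. \<forall>th>0. gamma_quantile kappa th r = th * q"
      then obtain q where q: "q \<ge> 0" "\<And>t. t > 0 \<Longrightarrow> gamma_quantile kappa t r = t * q" by auto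
      have "convex_on {max 1 (C0/Emax)<..} (\<lambda>Q. (q * K) * exp (LL psi Emax C0 Q))"
        using q K by (intro convex_on_cmul h_convex) (use assms C0 in auto)
      then have "convex_on I (\<lambda>Q. (q * K) * exp (LL psi Emax C0 Q))"
        using assms(15) cI unfolding C0_def by (rule convex_on_subset)
      then show ?thesis
      proof (rule convex_on_cong')
        fix x assume x: "x \<in> I"
        have "Tc_quantile D psi kappa Psmax fmax Emax eps eta r x = th x * q"
          unfolding Tc using q(2)[OF th_pos[OF x]] .
        then show "q * K * exp (LL psi Emax C0 x) = Tc_quantile D psi kappa Psmax fmax Emax eps eta r x"
          using th_eq[OF x] by simp
      qed
    qed
  qed
  have conv_Ttx: "convex_on I (Ttx_quantile D eps np tp r)"
  proof (rule convex_on_subset[OF Ttx_convex _ cI])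
    show "I \<subseteq> {0<..}" using QI by force
  qed (use assms znorm_nonneg in auto)
  show ?thesis using conv_Tc conv_Ttx by (intro convex_on_add) auto
qed


end
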